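(* Let $\alpha>0$ and $0<\beta\le\frac14$. Consider the model $Y_i=f(x_i)+V^{1/2}(x_i)\xi_i$, $i=0,\dots,n$, $x_i=i/n$, with $\xi_0,\dots,\xi_n\overset{iid}{\sim}N(0,1)$. For every $\eta\in(0,1)$ there exists $c_\eta>0$ not depending on $n$ such that for all $0<c<c_\eta$ and all $n$ sufficiently large depending only on $\eta$, $$\inf_\varphi\left\{\sup_{f\in\mathcal{H}_\alpha,\,V\in\mathcal{D}_0}P_{f,V}\{\varphi=1\}+\sup_{f\in\mathcal{H}_\alpha,\,V\in\mathcal{D}_{1,\beta}(cn^{-1/4})}P_{f,V}\{\varphi=0\}\right\}\ge1-\eta,$$ where the infimum is over all tests $\varphi$ (measurable functions of $(Y_0,\dots,Y_n)$ into $\{0,1\}$).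
   Context: $\mathcal{H}_\alpha=\mathcal{H}_\alpha(M)$: functions $g:[0,1]\to\mathbb{R}$ with $|g^{(\lfloor\alpha\rfloor)}(x)-g^{(\lfloor\alpha\rfloor)}(y)|\le M|x-y|^{\alpha-\lfloor\alpha\rfloor}$ for all $x,y$ and $\|g^{(k)}\|_\infty\le M$ for $k=0,\dots,\lfloor\alpha\rfloor$; $M$ is a fixed sufficiently large constant. $\mathcal{D}_0=\{V:[0,1]\to[0,\infty):V(x_i)=\sigma^2\ \forall i\text{ for some }0\le\sigma^2\le M\}$; $\mathcal{D}_{1,\beta}(\varepsilon)=\{V\in\mathcal{H}_\beta:V\ge0,\ \sqrt{\frac1{n+1}\sum_{i=0}^n(V(x_i)-\bar V_n)^2}\ge\varepsilon\}$, $\bar V_n=\frac1{n+1}\sum_{i=0}^nV(x_i)$. $P_{f,V}$ is the law of the data. *)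

theory Defs
  imports "HOL-Probability.Probability"
begin

definition holder_class :: "real \<Rightarrow> real \<Rightarrow> (real \<Rightarrow> real) \<Rightarrow> bool" where
  "holder_class \<alpha> M g \<longleftrightarrow>
     (let m = nat \<lfloor>\<alpha>\<rfloor> in
      \<exists>D :: nat \<Rightarrow> real \<Rightarrow> real.
        (\<forall>x\<in>{0..1}. D 0 x = g x) \<and>
        (\<forall>k<m. \<forall>x\<in>{0..1}. (D k has_real_derivative D (Suc k) x) (at x within {0..1})) \<and>
        (\<forall>k\<le>m. \<forall>x\<in>{0..1}. \<bar>D k x\<bar> \<le> M) \<and>
        (\<forall>x\<in>{0..1}. \<forall>y\<in>{0..1}. \<bar>D m x - D m y\<bar> \<le> M * \<bar>x - y\<bar> powr (\<alpha> - real m)))"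

definition design :: "nat \<Rightarrow> nat \<Rightarrow> real" where
  "design n i = real i / real n"

definition gauss :: "real \<Rightarrow> real \<Rightarrow> real measure" where
  "gauss \<mu> v = (if v = 0 then return borel \<mu> else density lborel (normal_density \<mu> (sqrt v)))"

text \<open>Law P_{f,V} of (Y_0,...,Y_n), Y_i = f(x_i) + V(x_i)^{1/2} xi_i, xi_i iid N(0,1).\<close>
definition law :: "nat \<Rightarrow> (real \<Rightarrow> real) \<Rightarrow> (real \<Rightarrow> real) \<Rightarrow> (nat \<Rightarrow> real) measure" where
  "law n f V = PiM {..n} (\<lambda>i. gauss (f (design n i)) (V (design n i)))"

definition sample_space :: "nat \<Rightarrow> (nat \<Rightarrow> real) measure" where
  "sample_space n = PiM {..n} (\<lambda>_. borel)"

definition tests :: "nat \<Rightarrow> ((nat \<Rightarrow> real) \<Rightarrow> nat) set" where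
  "tests n = {\<phi>. \<phi> \<in> sample_space n \<rightarrow>\<^sub>M count_space UNIV \<and> (\<forall>y. \<phi> y \<in> {0, 1})}"

definition D0 :: "real \<Rightarrow> nat \<Rightarrow> (real \<Rightarrow> real) set" where
  "D0 M n = {V. (\<forall>x\<in>{0..1}. V x \<ge> 0) \<and>
      (\<exists>\<sigma>2. 0 \<le> \<sigma>2 \<and> \<sigma>2 \<le> M \<and> (\<forall>i\<le>n. V (design n i) = \<sigma>2))}"

definition mean_V :: "nat \<Rightarrow> (real \<Rightarrow> real) \<Rightarrow> real" where
  "mean_V n V = (\<Sum>i\<le>n. V (design n i)) / real (n + 1)"

definition D1 :: "real \<Rightarrow> real \<Rightarrow> nat \<Rightarrow> real \<Rightarrow> (real \<Rightarrow> real) set" where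
  "D1 \<beta> M n \<epsilon> = {V. holder_class \<beta> M V \<and> (\<forall>x\<in>{0..1}. V x \<ge> 0) \<and>
      sqrt ((\<Sum>i\<le>n. (V (design n i) - mean_V n V)\<^sup>2) / real (n + 1)) \<ge> \<epsilon>}"

end

theory Submission
  imports Defs
begin

lemma PiM_density_lborel:
  fixes g :: "'i \<Rightarrow> real \<Rightarrow> real"
  assumes I: "finite I" and g: "\<And>i. g i \<in> borel_measurable borel"
    and gnn: "\<And>i x. g i x \<ge> 0"
    and pr: "\<And>i. prob_space (density lborel (g i))"
  shows "PiM I (\<lambda>i. density lborel (g i)) = density (PiM I (\<lambda>_. lborel)) (\<lambda>x. \<Prod>i\<in>I. g i (x i))"
proof -
  interpret P: product_sigma_finite "\<lambda>i. density lborel (g i)"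
    unfolding product_sigma_finite_def using pr prob_space_imp_sigma_finite by blast
  interpret L: product_sigma_finite "\<lambda>_. lborel :: real measure" by unfold_locales
  note g[measurable]
  show ?thesis
  proof (rule P.PiM_eqI[symmetric])
    show "finite I" by fact
    show "sets (density (Pi\<^sub>M I (\<lambda>_. lborel)) (\<lambda>x. ennreal (\<Prod>i\<in>I. g i (x i)))) = sets (Pi\<^sub>M I (\<lambda>i. density lborel (g i)))"
      by (auto intro!: sets_PiM_cong)
    fix A assume A: "\<And>i. i \<in> I \<Longrightarrow> A i \<in> sets (density lborel (g i))"
    have "emeasure (density (Pi\<^sub>M I (\<lambda>_. lborel)) (\<lambda>x. ennreal (\<Prod>i\<in>I. g i (x i)))) (Pi\<^sub>E I A)
       = (\<integral>\<^sup>+x. ennreal (\<Prod>i\<in>I. g i (x i)) * indicator (Pi\<^sub>E I A) x \<partial>Pi\<^sub>M I (\<lambda>_. lborel))"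
      using A by (intro emeasure_density) (auto intro!: sets_PiM_I_finite I, measurable)
    also have "\<dots> = (\<integral>\<^sup>+x. (\<Prod>i\<in>I. ennreal (g i (x i)) * indicator (A i) (x i)) \<partial>Pi\<^sub>M I (\<lambda>_. lborel))"
      apply (intro nn_integral_cong)
      apply (subst prod.distrib)
      apply (subst prod_ennreal[symmetric])
      using gnn apply simp
      apply (auto simp: indicator_def space_PiM PiE_iff I)
      done
    also have "\<dots> = (\<Prod>i\<in>I. \<integral>\<^sup>+y. ennreal (g i y) * indicator (A i) y \<partial>lborel)"
      using A by (intro L.product_nn_integral_prod I) (auto simp: g)
    also have "\<dots> = (\<Prod>i\<in>I. emeasure (density lborel (g i)) (A i))"
      using A by (intro prod.cong refl emeasure_density[symmetric]) (auto simp: g)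
    finally show "emeasure (density (Pi\<^sub>M I (\<lambda>_. lborel)) (\<lambda>x. ennreal (\<Prod>i\<in>I. g i (x i)))) (Pi\<^sub>E I A)
       = (\<Prod>i\<in>I. emeasure (density lborel (g i)) (A i))" .
  qed
qed
lemma gauss_ratio_pt:
  fixes a b y :: real
  assumes a: "a > 0" and b: "b > 0" and D: "a + b - a * b > 0"
  shows "normal_density 0 (sqrt a) y * normal_density 0 (sqrt b) y / normal_density 0 1 y
       = (1 / sqrt (a + b - a * b)) * normal_density 0 (sqrt (a * b / (a + b - a * b))) y"
proof -
  define D where "D = a + b - a * b"
  have Dp: "D > 0" using D D_def by simp
  have e: "exp (-(y^2) / (2 * a)) * exp (-(y^2) / (2 * b)) / exp (-(y^2) / 2)
      = exp (-(y^2) / (2 * (a * b / D)))"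
    unfolding exp_add[symmetric] exp_diff[symmetric] using a b Dp
    by (simp add: D_def field_simps)
  have s: "1 / sqrt (2 * pi * a) * (1 / sqrt (2 * pi * b)) / (1 / sqrt (2 * pi))
      = 1 / sqrt D * (1 / sqrt (2 * pi * (a * b / D)))"
    using a b Dp by (simp add: real_sqrt_mult real_sqrt_divide field_simps)
  have "normal_density 0 (sqrt a) y * normal_density 0 (sqrt b) y / normal_density 0 1 y
      = (1 / sqrt (2 * pi * a) * (1 / sqrt (2 * pi * b)) / (1 / sqrt (2 * pi))) *
        (exp (-(y^2) / (2 * a)) * exp (-(y^2) / (2 * b)) / exp (-(y^2) / 2))"
    using a b by (simp add: normal_density_def)
  also have "\<dots> = 1 / sqrt D * (1 / sqrt (2 * pi * (a * b / D))) * exp (-(y^2) / (2 * (a * b / D)))"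
    using s e by simp
  also have "\<dots> = (1 / sqrt D) * normal_density 0 (sqrt (a * b / D)) y"
    using a b Dp by (simp add: normal_density_def)
  finally show ?thesis by (simp add: D_def)
qed

lemma gauss_ratio_integral:
  fixes a b :: real
  assumes a: "a > 0" and b: "b > 0" and D: "a + b - a * b > 0"
  shows "(\<integral>\<^sup>+y. ennreal (normal_density 0 (sqrt a) y * normal_density 0 (sqrt b) y / normal_density 0 1 y) \<partial>lborel)
       = ennreal (1 / sqrt (a + b - a * b))"
proof -
  interpret p: prob_space "density lborel (normal_density 0 (sqrt (a * b / (a + b - a * b))))"
    using divide_pos_pos[OF mult_pos_pos[OF a b] D] by (intro prob_space_normal_density) simp
  have "(\<integral>\<^sup>+y. ennreal (normal_density 0 (sqrt a) y * normal_density 0 (sqrt b) y / normal_density 0 1 y) \<partial>lborel)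
     = (\<integral>\<^sup>+y. ennreal (1 / sqrt (a + b - a * b)) * ennreal (normal_density 0 (sqrt (a * b / (a + b - a * b))) y) \<partial>lborel)"
    using gauss_ratio_pt[OF a b D] D a b divide_pos_pos[OF mult_pos_pos[OF a b] D]
    by (intro nn_integral_cong) (simp add: ennreal_mult'[symmetric] normal_density_nonneg)
  also have "\<dots> = ennreal (1 / sqrt (a + b - a * b)) * (\<integral>\<^sup>+y. ennreal (normal_density 0 (sqrt (a * b / (a + b - a * b))) y) \<partial>lborel)"
    by (rule nn_integral_cmult) simp
  also have "(\<integral>\<^sup>+y. ennreal (normal_density 0 (sqrt (a * b / (a + b - a * b))) y) \<partial>lborel) = 1"
    using p.emeasure_space_1 by (simp add: emeasure_density)
  finally show ?thesis by simp
qed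

definition kk :: "nat \<Rightarrow> nat" where "kk n = (n + 1) div 2"
definition sgn_b :: "bool \<Rightarrow> real" where "sgn_b b = (if b then 1 else -1)"
definition esign :: "nat \<Rightarrow> (nat \<Rightarrow> bool) \<Rightarrow> nat \<Rightarrow> real" where
  "esign n s i = (if i < 2 * kk n then (if even i then sgn_b (s (i div 2)) else - sgn_b (s (i div 2))) else 0)"
definition vval :: "nat \<Rightarrow> real \<Rightarrow> (nat \<Rightarrow> bool) \<Rightarrow> nat \<Rightarrow> real" where
  "vval n \<delta> s i = 1 + \<delta> * esign n s i"
definition SS :: "nat \<Rightarrow> (nat \<Rightarrow> bool) set" where
  "SS n = PiE {..<kk n} (\<lambda>_. UNIV)"

lemma prod_pairs: "(\<Prod>i<2*k. f i) = (\<Prod>j<k. f (2*j) * f (2*j+1 :: nat)) " for f :: "nat \<Rightarrow> 'a::comm_monoid_mult"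
  by (induction k) (simp_all add: mult.assoc)

lemma sum_pairs: "(\<Sum>i<2*k. f i) = (\<Sum>j<k. f (2*j) + f (2*j+1 :: nat)) " for f :: "nat \<Rightarrow> 'a::comm_monoid_add"
  by (induction k) (simp_all add: add.assoc)

lemma kk_le: "2 * kk n \<le> n + 1" "n \<le> 2 * kk n" unfolding kk_def by auto

lemma esign_abs: "\<bar>esign n s i\<bar> \<le> 1"
  unfolding esign_def sgn_b_def by auto

lemma prod_upto_n:
  fixes f :: "nat \<Rightarrow> 'a::comm_monoid_mult"
  assumes "\<And>i. i \<ge> 2 * kk n \<Longrightarrow> f i = 1"
  shows "(\<Prod>i\<le>n. f i) = (\<Prod>j<kk n. f (2*j) * f (2*j+1))"
proof -
  have "(\<Prod>i\<le>n. f i) = (\<Prod>i<2 * kk n. f i)"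
    using kk_le[of n] assms by (intro prod.mono_neutral_right) auto
  then show ?thesis by (simp add: prod_pairs)
qed

lemma sum_upto_n:
  fixes f :: "nat \<Rightarrow> 'a::comm_monoid_add"
  assumes "\<And>i. i \<ge> 2 * kk n \<Longrightarrow> f i = 0"
  shows "(\<Sum>i\<le>n. f i) = (\<Sum>j<kk n. f (2*j) + f (2*j+1))"
proof -
  have "(\<Sum>i\<le>n. f i) = (\<Sum>i<2 * kk n. f i)"
    using kk_le[of n] assms by (intro sum.mono_neutral_right) auto
  then show ?thesis by (simp add: sum_pairs)
qed

lemma esign_pair: "j < kk n \<Longrightarrow> esign n s (2*j) = sgn_b (s j) \<and> esign n s (2*j+1) = - sgn_b (s j)"
  unfolding esign_def by auto

lemma sum_esign: "(\<Sum>i\<le>n. esign n s i) = 0"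
  by (subst sum_upto_n) (auto simp: esign_def esign_pair intro!: sum.neutral)

lemma sgn_b_sq[simp]: "(sgn_b b)^2 = 1" unfolding sgn_b_def by simp

lemma sum_esign_sq: "(\<Sum>i\<le>n. (esign n s i)^2) = 2 * kk n"
proof -
  have "(\<Sum>i\<le>n. (esign n s i)^2) = (\<Sum>j<kk n. (2::real))"
    by (subst sum_upto_n) (auto simp: esign_def esign_pair)
  then show ?thesis by simp
qed

lemma double_sum_prod:
  fixes g :: "bool \<Rightarrow> bool \<Rightarrow> real"
  shows "(\<Sum>s\<in>SS n. \<Sum>s'\<in>SS n. \<Prod>j<kk n. g (s j) (s' j)) = (\<Sum>b\<in>UNIV. \<Sum>b'\<in>UNIV. g b b') ^ kk n"
proof -
  have "(\<Sum>s\<in>SS n. \<Sum>s'\<in>SS n. \<Prod>j<kk n. g (s j) (s' j)) = (\<Sum>s\<in>SS n. \<Prod>j<kk n. \<Sum>b'\<in>UNIV. g (s j) b')"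
    unfolding SS_def by (intro sum.cong refl prod_sum_PiE[symmetric]) auto
  also have "\<dots> = (\<Prod>j<kk n. \<Sum>b\<in>UNIV. \<Sum>b'\<in>UNIV. g b b')"
    unfolding SS_def by (intro prod_sum_PiE[symmetric]) auto
  finally show ?thesis by simp
qed

lemma card_SS: "card (SS n) = 2 ^ kk n"
  unfolding SS_def by (simp add: card_PiE)

lemma finite_SS: "finite (SS n)" unfolding SS_def by (simp add: finite_PiE)


definition Pd :: "nat \<Rightarrow> real \<Rightarrow> (nat \<Rightarrow> bool) \<Rightarrow> (nat \<Rightarrow> real) \<Rightarrow> real" where
  "Pd n \<delta> s x = (\<Prod>i\<le>n. normal_density 0 (sqrt (vval n \<delta> s i)) (x i))"
definition P0d :: "nat \<Rightarrow> (nat \<Rightarrow> real) \<Rightarrow> real" where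
  "P0d n x = (\<Prod>i\<le>n. normal_density 0 1 (x i))"

lemma nd_meas[measurable]: "normal_density m s \<in> borel_measurable borel"
  unfolding normal_density_def by measurable

lemma vval_bounds:
  assumes "0 \<le> \<delta>" "\<delta> \<le> 1/2"
  shows "vval n \<delta> s i \<ge> 1/2" "vval n \<delta> s i \<le> 3/2"
  using esign_abs[of n s i] assms unfolding vval_def abs_le_iff
  by (auto intro: order_trans[of _ "1 - \<delta>"] order_trans[of _ "1 + \<delta>"] simp: mult_left_le) (smt (verit) mult_left_le mult_minus_right)+

lemma chi_value:
  assumes d: "0 \<le> \<delta>" "\<delta> \<le> 1/2"
  shows "(\<integral>\<^sup>+x. ennreal ((\<Sum>s\<in>SS n. Pd n \<delta> s x)^2 / (real (card (SS n)))^2 / P0d n x) \<partial>PiM {..n} (\<lambda>_. lborel))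
       = ennreal ((1 / (1 - \<delta>^4)) ^ kk n)"
proof -
  interpret L: product_sigma_finite "\<lambda>_. lborel :: real measure" by unfold_locales
  define c where "c = real (card (SS n))"
  have c: "c = 2 ^ kk n" unfolding c_def card_SS by simp
  define R where "R a b y = normal_density 0 (sqrt a) y * normal_density 0 (sqrt b) y / normal_density 0 1 y" for a b y
  have Rnn: "R a b y \<ge> 0" for a b y unfolding R_def by (simp add: normal_density_nonneg)
  have Rm[measurable]: "R a b \<in> borel_measurable borel" for a b unfolding R_def by measurable
  have v: "vval n \<delta> s i > 0" for s i using vval_bounds[OF d, of n s i] by simp
  have D: "vval n \<delta> s i + vval n \<delta> s' i - vval n \<delta> s i * vval n \<delta> s' i = 1 - \<delta>^2 * (esign n s i * esign n s' i)" for s s' i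
    unfolding vval_def by (simp add: algebra_simps power2_eq_square)
  have Dpos: "1 - \<delta>^2 * (esign n s i * esign n s' i) > 0" for s s' i
  proof -
    have "\<bar>esign n s i * esign n s' i\<bar> \<le> 1" using esign_abs[of n s i] esign_abs[of n s' i]
      by (simp add: abs_mult mult_le_one)
    moreover have "\<delta>^2 \<le> (1/2)^2" using d by (intro power_mono) auto
    ultimately have "\<delta>^2 * (esign n s i * esign n s' i) \<le> \<delta>^2 * 1"
      by (intro mult_left_mono) auto
    then have "\<delta>^2 * (esign n s i * esign n s' i) \<le> 1/4" using \<open>\<delta>^2 \<le> (1/2)^2\<close> by (simp add: power2_eq_square)
    then show ?thesis by simp
  qed
  have pt: "(\<Sum>s\<in>SS n. Pd n \<delta> s x)^2 / c^2 / P0d n x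
      = (\<Sum>s\<in>SS n. \<Sum>s'\<in>SS n. (1 / c^2) * (\<Prod>i\<le>n. R (vval n \<delta> s i) (vval n \<delta> s' i) (x i)))" for x
  proof -
    have "(\<Sum>s\<in>SS n. Pd n \<delta> s x)^2 / c^2 / P0d n x = (\<Sum>s\<in>SS n. \<Sum>s'\<in>SS n. (1 / c^2) * (Pd n \<delta> s x * Pd n \<delta> s' x / P0d n x))"
    proof -
      have "(\<Sum>s\<in>SS n. Pd n \<delta> s x)^2 = (\<Sum>s\<in>SS n. \<Sum>s'\<in>SS n. Pd n \<delta> s x * Pd n \<delta> s' x)"
        by (simp only: power2_eq_square sum_product)
      then show ?thesis by (simp add: sum_divide_distrib)
    qed
    also have "\<dots> = (\<Sum>s\<in>SS n. \<Sum>s'\<in>SS n. (1 / c^2) * (\<Prod>i\<le>n. R (vval n \<delta> s i) (vval n \<delta> s' i) (x i)))"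
      unfolding Pd_def P0d_def R_def by (simp add: prod.distrib[symmetric] prod_dividef)
    finally show ?thesis .
  qed
  have "(\<integral>\<^sup>+x. ennreal ((\<Sum>s\<in>SS n. Pd n \<delta> s x)^2 / c^2 / P0d n x) \<partial>PiM {..n} (\<lambda>_. lborel))
      = (\<integral>\<^sup>+x. (\<Sum>s\<in>SS n. \<Sum>s'\<in>SS n. ennreal (1 / c^2) * (\<Prod>i\<le>n. ennreal (R (vval n \<delta> s i) (vval n \<delta> s' i) (x i)))) \<partial>PiM {..n} (\<lambda>_. lborel))"
  proof (intro nn_integral_cong)
    fix x
    define T where "T s s' = (1 / c^2) * (\<Prod>i\<le>n. R (vval n \<delta> s i) (vval n \<delta> s' i) (x i))" for s s'
    have Tnn: "T s s' \<ge> 0" for s s' unfolding T_def using Rnn by (simp add: prod_nonneg)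
    have eachT: "ennreal (T s s') = ennreal (1 / c^2) * (\<Prod>i\<le>n. ennreal (R (vval n \<delta> s i) (vval n \<delta> s' i) (x i)))" for s s'
      unfolding T_def using Rnn by (subst ennreal_mult') (auto simp: prod_ennreal prod_nonneg)
    have "(\<Sum>s\<in>SS n. \<Sum>s'\<in>SS n. ennreal (T s s')) = ennreal (\<Sum>s\<in>SS n. \<Sum>s'\<in>SS n. T s s')"
      using Tnn by (simp add: sum_nonneg)
    then show "ennreal ((\<Sum>s\<in>SS n. Pd n \<delta> s x)^2 / c^2 / P0d n x) = (\<Sum>s\<in>SS n. \<Sum>s'\<in>SS n. ennreal (1 / c^2) * (\<Prod>i\<le>n. ennreal (R (vval n \<delta> s i) (vval n \<delta> s' i) (x i))))"
      unfolding pt T_def[symmetric] eachT[symmetric] by simp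
  qed
  also have "\<dots> = (\<Sum>s\<in>SS n. \<Sum>s'\<in>SS n. ennreal (1 / c^2) * (\<integral>\<^sup>+x. (\<Prod>i\<le>n. ennreal (R (vval n \<delta> s i) (vval n \<delta> s' i) (x i))) \<partial>PiM {..n} (\<lambda>_. lborel)))"
    using finite_SS by (simp add: nn_integral_sum nn_integral_cmult)
  also have "\<dots> = (\<Sum>s\<in>SS n. \<Sum>s'\<in>SS n. ennreal (1 / c^2) * (\<Prod>i\<le>n. ennreal (1 / sqrt (1 - \<delta>^2 * (esign n s i * esign n s' i)))))"
  proof (intro sum.cong refl arg_cong2[where f="(*)"])
    fix s s'
    have "(\<integral>\<^sup>+x. (\<Prod>i\<le>n. ennreal (R (vval n \<delta> s i) (vval n \<delta> s' i) (x i))) \<partial>PiM {..n} (\<lambda>_. lborel))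
        = (\<Prod>i\<le>n. \<integral>\<^sup>+y. ennreal (R (vval n \<delta> s i) (vval n \<delta> s' i) y) \<partial>lborel)"
      by (intro L.product_nn_integral_prod) auto
    also have "\<dots> = (\<Prod>i\<le>n. ennreal (1 / sqrt (1 - \<delta>^2 * (esign n s i * esign n s' i))))"
      unfolding R_def using v D Dpos
      by (intro prod.cong refl) (subst gauss_ratio_integral, auto)
    finally show "(\<integral>\<^sup>+x. (\<Prod>i\<le>n. ennreal (R (vval n \<delta> s i) (vval n \<delta> s' i) (x i))) \<partial>PiM {..n} (\<lambda>_. lborel))
        = (\<Prod>i\<le>n. ennreal (1 / sqrt (1 - \<delta>^2 * (esign n s i * esign n s' i))))" .
  qed
  also have "\<dots> = ennreal ((1 / c^2) * (\<Sum>s\<in>SS n. \<Sum>s'\<in>SS n. \<Prod>i\<le>n. 1 / sqrt (1 - \<delta>^2 * (esign n s i * esign n s' i))))"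
  proof -
    define T where "T s s' = (1 / c^2) * (\<Prod>i\<le>n. 1 / sqrt (1 - \<delta>^2 * (esign n s i * esign n s' i)))" for s s'
    have Fnn: "0 \<le> 1 / sqrt (1 - \<delta>^2 * (esign n s i * esign n s' i))" for s s' i using Dpos[of s i s'] by simp
    have Tnn: "T s s' \<ge> 0" for s s' unfolding T_def using Fnn by (simp add: prod_nonneg)
    have eachT: "ennreal (T s s') = ennreal (1 / c^2) * (\<Prod>i\<le>n. ennreal (1 / sqrt (1 - \<delta>^2 * (esign n s i * esign n s' i))))" for s s'
      unfolding T_def using Fnn by (subst ennreal_mult') (auto simp: prod_ennreal prod_nonneg)
    have "(\<Sum>s\<in>SS n. \<Sum>s'\<in>SS n. ennreal (T s s')) = ennreal (\<Sum>s\<in>SS n. \<Sum>s'\<in>SS n. T s s')"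
      using Tnn by (simp add: sum_nonneg)
    then show ?thesis unfolding eachT[symmetric] T_def by (simp add: sum_distrib_left)
  qed
  also have "(\<Sum>s\<in>SS n. \<Sum>s'\<in>SS n. \<Prod>i\<le>n. 1 / sqrt (1 - \<delta>^2 * (esign n s i * esign n s' i)))
      = (\<Sum>s\<in>SS n. \<Sum>s'\<in>SS n. \<Prod>j<kk n. 1 / (1 - \<delta>^2 * (sgn_b (s j) * sgn_b (s' j))))"
  proof (intro sum.cong refl)
    fix s s' assume "s \<in> SS n" "s' \<in> SS n"
    have "(\<Prod>i\<le>n. 1 / sqrt (1 - \<delta>^2 * (esign n s i * esign n s' i)))
       = (\<Prod>j<kk n. (1 / sqrt (1 - \<delta>^2 * (esign n s (2*j) * esign n s' (2*j)))) * (1 / sqrt (1 - \<delta>^2 * (esign n s (2*j+1) * esign n s' (2*j+1)))))"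
      by (rule prod_upto_n) (simp add: esign_def)
    also have "\<dots> = (\<Prod>j<kk n. 1 / (1 - \<delta>^2 * (sgn_b (s j) * sgn_b (s' j))))"
    proof (intro prod.cong refl)
      fix j assume "j \<in> {..<kk n}"
      then have j: "j < kk n" by simp
      have p: "1 - \<delta>^2 * (sgn_b (s j) * sgn_b (s' j)) > 0" using Dpos[of s "2*j" s'] esign_pair[OF j] by simp
      show "(1 / sqrt (1 - \<delta>^2 * (esign n s (2*j) * esign n s' (2*j)))) * (1 / sqrt (1 - \<delta>^2 * (esign n s (2*j+1) * esign n s' (2*j+1))))
          = 1 / (1 - \<delta>^2 * (sgn_b (s j) * sgn_b (s' j)))"
        using esign_pair[OF j, of s] esign_pair[OF j, of s'] p
        by (simp add: real_sqrt_mult[symmetric])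
    qed
    finally show "(\<Prod>i\<le>n. 1 / sqrt (1 - \<delta>^2 * (esign n s i * esign n s' i)))
       = (\<Prod>j<kk n. 1 / (1 - \<delta>^2 * (sgn_b (s j) * sgn_b (s' j))))" .
  qed
  also have "\<dots> = (4 / (1 - \<delta>^4)) ^ kk n"
  proof -
    have "(\<Sum>b\<in>UNIV. \<Sum>b'\<in>UNIV. 1 / (1 - \<delta>^2 * (sgn_b b * sgn_b b'))) = 4 / (1 - \<delta>^4)"
    proof -
      have "\<delta>^2 \<le> (1/2)^2" using d by (intro power_mono) auto
      then have d2: "\<delta>^2 < 1" by (simp add: power2_eq_square)
      have "(\<Sum>b\<in>UNIV. \<Sum>b'\<in>UNIV. 1 / (1 - \<delta>^2 * (sgn_b b * sgn_b b'))) = 2 / (1 - \<delta>^2) + 2 / (1 + \<delta>^2)"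
        by (simp add: UNIV_bool sgn_b_def)
      also have "\<dots> = 4 / (1 - \<delta>^4)"
      proof -
        have f: "1 - \<delta>^4 = (1 - \<delta>^2) * (1 + \<delta>^2)" by (simp add: algebra_simps power2_eq_square power4_eq_xxxx)
        have a: "1 - \<delta>^2 \<noteq> 0" "1 + \<delta>^2 \<noteq> 0" using d2 by (auto, smt (verit) zero_le_power2)
        show ?thesis unfolding f using a by (simp add: field_simps)
      qed
      finally show ?thesis .
    qed
    then show ?thesis using double_sum_prod[of "\<lambda>b b'. 1 / (1 - \<delta>^2 * (sgn_b b * sgn_b b'))" n] by simp
  qed
  also have "(1 / c^2) * (4 / (1 - \<delta>^4)) ^ kk n = (1 / (1 - \<delta>^4)) ^ kk n"
  proof -
    have "((2::real) ^ kk n)^2 = 4 ^ kk n" by (simp add: power2_eq_square power_mult_distrib[symmetric])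
    then show ?thesis unfolding c by (simp add: power_divide)
  qed
  finally show ?thesis unfolding c_def .
qed


definition Fw :: "(nat \<Rightarrow> real) \<Rightarrow> real \<Rightarrow> real" where
  "Fw w u = (1 - (u - real (nat \<lfloor>u\<rfloor>))) * w (nat \<lfloor>u\<rfloor>) + (u - real (nat \<lfloor>u\<rfloor>)) * w (Suc (nat \<lfloor>u\<rfloor>))"

lemma Fw_nat: "Fw w (real i) = w i" unfolding Fw_def by simp

lemma floor_facts:
  assumes "u \<ge> 0"
  shows "real (nat \<lfloor>u\<rfloor>) \<le> u" "u < real (nat \<lfloor>u\<rfloor>) + 1"
  using assms by (simp_all add: of_nat_nat)

lemma Fw_range:
  assumes w: "\<And>i. \<bar>w i - 1\<bar> \<le> \<delta>" and u: "u \<ge> 0"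
  shows "\<bar>Fw w u - 1\<bar> \<le> \<delta>"
proof -
  define m where "m = nat \<lfloor>u\<rfloor>"
  define th where "th = u - real m"
  have th: "0 \<le> th" "th \<le> 1" using floor_facts[OF u] unfolding th_def m_def by linarith+
  have "Fw w u - 1 = (1 - th) * (w m - 1) + th * (w (Suc m) - 1)"
    unfolding Fw_def m_def[symmetric] th_def[symmetric] by (simp add: algebra_simps)
  also have "\<bar>\<dots>\<bar> \<le> (1 - th) * \<delta> + th * \<delta>"
  proof -
    have "\<bar>(1 - th) * (w m - 1)\<bar> \<le> (1 - th) * \<delta>" using th w[of m] by (simp add: abs_mult mult_left_mono)
    moreover have "\<bar>th * (w (Suc m) - 1)\<bar> \<le> th * \<delta>" using th w[of "Suc m"] by (simp add: abs_mult mult_left_mono)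
    ultimately show ?thesis by (smt (verit))
  qed
  finally show ?thesis by (simp add: algebra_simps)
qed

lemma Fw_lip:
  assumes w: "\<And>i j. \<bar>w i - w j\<bar> \<le> 2 * \<delta>" and u: "0 \<le> u" "u \<le> v" "v \<le> u + 1"
  shows "\<bar>Fw w v - Fw w u\<bar> \<le> 2 * \<delta> * (v - u)"
proof -
  define m where "m = nat \<lfloor>u\<rfloor>"
  define m' where "m' = nat \<lfloor>v\<rfloor>"
  have v0: "v \<ge> 0" using u by simp
  have fu: "real m \<le> u" "u < real m + 1" using floor_facts[OF u(1)] unfolding m_def by auto
  have fv: "real m' \<le> v" "v < real m' + 1" using floor_facts[OF v0] unfolding m'_def by auto
  have mm: "m' = m \<or> m' = Suc m"
  proof -
    have "m \<le> m'" using fu fv u by linarith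
    moreover have "m' \<le> Suc m" using fu fv u by linarith
    ultimately show ?thesis by linarith
  qed
  have Fu: "Fw w u = (1 - (u - real m)) * w m + (u - real m) * w (Suc m)" unfolding Fw_def m_def ..
  have Fv: "Fw w v = (1 - (v - real m')) * w m' + (v - real m') * w (Suc m')" unfolding Fw_def m'_def ..
  have d0: "\<delta> \<ge> 0" using w[of 0 0] by simp
  show ?thesis
  proof (cases "m' = m")
    case True
    have "Fw w v - Fw w u = (v - u) * (w (Suc m) - w m)" unfolding Fu Fv True by (simp add: algebra_simps)
    then show ?thesis using w[of "Suc m" m] u by (simp add: abs_mult mult.commute mult_left_mono)
  next
    case False
    then have m': "m' = Suc m" using mm by simp
    have e1: "Fw w v - Fw w u = (v - real m') * (w (Suc m') - w m') + (real m' - u) * (w m' - w m)"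
      unfolding Fu Fv m' by (simp add: algebra_simps)
    have a1: "\<bar>(v - real m') * (w (Suc m') - w m')\<bar> \<le> (v - real m') * (2 * \<delta>)"
      using fv w[of "Suc m'" m'] by (simp add: abs_mult mult_left_mono)
    have a2: "\<bar>(real m' - u) * (w m' - w m)\<bar> \<le> (real m' - u) * (2 * \<delta>)"
      using fu m' w[of m' m] by (simp add: abs_mult mult_left_mono)
    have "\<bar>Fw w v - Fw w u\<bar> \<le> (v - real m') * (2 * \<delta>) + (real m' - u) * (2 * \<delta>)"
      unfolding e1 using a1 a2 by (smt (verit))
    also have "\<dots> = 2 * \<delta> * (v - u)" by (simp add: algebra_simps)
    finally show ?thesis .
  qed
qed

lemma Fw_holder:
  assumes w: "\<And>i. \<bar>w i - 1\<bar> \<le> \<delta>" and n: "n > 0" and b: "0 < \<beta>" "\<beta> \<le> 1"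
    and x: "x \<in> {0..1}" and y: "y \<in> {0..1}"
  shows "\<bar>Fw w (real n * x) - Fw w (real n * y)\<bar> \<le> 2 * \<delta> * real n powr \<beta> * \<bar>x - y\<bar> powr \<beta>"
proof -
  have d0: "\<delta> \<ge> 0" using w[of 0] by simp
  have w2: "\<bar>w i - w j\<bar> \<le> 2 * \<delta>" for i j using w[of i] w[of j] by (smt (verit))
  have rw: "real n powr \<beta> * \<bar>x - y\<bar> powr \<beta> = (real n * \<bar>x - y\<bar>) powr \<beta>"
    by (simp add: powr_mult)
  have nxy: "real n * \<bar>x - y\<bar> = \<bar>real n * x - real n * y\<bar>" by (simp add: abs_mult right_diff_distrib[symmetric])
  define t where "t = real n * \<bar>x - y\<bar>"
  have t0: "t \<ge> 0" unfolding t_def by simp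
  have key: "\<bar>Fw w (real n * x) - Fw w (real n * y)\<bar> \<le> 2 * \<delta> * min 1 t"
  proof -
    have r1: "\<bar>Fw w (real n * x) - Fw w (real n * y)\<bar> \<le> 2 * \<delta>"
    proof -
      have "\<bar>Fw w (real n * x) - 1\<bar> \<le> \<delta>" "\<bar>Fw w (real n * y) - 1\<bar> \<le> \<delta>"
        using x y by (auto intro!: Fw_range w)
      then show ?thesis by linarith
    qed
    have r2: "\<bar>Fw w (real n * x) - Fw w (real n * y)\<bar> \<le> 2 * \<delta> * t" if "t \<le> 1"
    proof (cases "x \<le> y")
      case True
      then show ?thesis using Fw_lip[OF w2, of "real n * x" "real n * y"] that x nxy
        unfolding t_def by (auto simp: abs_minus_commute mult_left_mono)
    next
      case False
      then show ?thesis using Fw_lip[OF w2, of "real n * y" "real n * x"] that y nxy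
        unfolding t_def by (auto simp: abs_minus_commute mult_left_mono)
    qed
    show ?thesis using r1 r2 by (cases "t \<le> 1") (auto simp: min_def)
  qed
  have "min 1 t \<le> t powr \<beta>"
  proof (cases "t \<le> 1")
    case True
    then show ?thesis
    proof (cases "t = 0")
      case False
      then have "t powr 1 \<le> t powr \<beta>" using True t0 b by (intro powr_mono') auto
      then show ?thesis using t0 True by simp
    qed simp
  next
    case False
    then have "1 \<le> t powr \<beta>" using b by (intro ge_one_powr_ge_zero) auto
    then show ?thesis by simp
  qed
  then have "2 * \<delta> * min 1 t \<le> 2 * \<delta> * t powr \<beta>" using d0 by (intro mult_left_mono) auto
  with key have "\<bar>Fw w (real n * x) - Fw w (real n * y)\<bar> \<le> 2 * \<delta> * t powr \<beta>" by linarith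
  then show ?thesis unfolding t_def rw[symmetric] by (simp add: mult.assoc)
qed

lemma am_gm_pt:
  fixes q p t :: real
  assumes "p > 0" "t > 0"
  shows "q \<le> (1 + t) * p + (q - p)^2 / (p * (4 * t))"
proof -
  have "0 \<le> (q - p - 2*t*p)^2 / (p * (4 * t))" using assms by simp
  also have "(q - p - 2*t*p)^2 / (p * (4 * t)) = (1 + t) * p + (q - p)^2 / (p * (4 * t)) - q"
    using assms by (simp add: field_simps power2_eq_square)
  finally show ?thesis by simp
qed

lemma key_bound:
  fixes L :: "'a measure" and p0 :: "'a \<Rightarrow> real" and p :: "'b \<Rightarrow> 'a \<Rightarrow> real"
  assumes S: "finite S" "S \<noteq> {}"
    and p0m: "p0 \<in> borel_measurable L" and pm: "\<And>s. s \<in> S \<Longrightarrow> p s \<in> borel_measurable L"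
    and p0pos: "\<And>x. p0 x > 0" and pnn: "\<And>s x. s \<in> S \<Longrightarrow> p s x \<ge> 0"
    and int0: "(\<integral>\<^sup>+x. p0 x \<partial>L) = 1" and ints: "\<And>s. s \<in> S \<Longrightarrow> (\<integral>\<^sup>+x. p s x \<partial>L) = 1"
    and chi: "(\<integral>\<^sup>+x. ennreal ((\<Sum>s\<in>S. p s x)^2 / (real (card S))^2 / p0 x) \<partial>L) \<le> ennreal (1 + e)"
    and t: "t > 0" and e: "e \<ge> 0" and A: "A \<in> sets L"
  shows "(\<integral>\<^sup>+x. ennreal ((\<Sum>s\<in>S. p s x) / card S) * indicator A x \<partial>L)
       \<le> (\<integral>\<^sup>+x. ennreal (p0 x) * indicator A x \<partial>L) + ennreal (t + e / (4 * t))"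
proof -
  define c where "c = real (card S)"
  have c: "c > 0" using S by (simp add: c_def card_gt_0_iff)
  define q where "q x = (\<Sum>s\<in>S. p s x) / c" for x
  have qnn: "q x \<ge> 0" for x unfolding q_def using c pnn by (simp add: sum_nonneg)
  note [measurable] = p0m pm
  have qm[measurable]: "q \<in> borel_measurable L" unfolding q_def using S by measurable
  have intq: "(\<integral>\<^sup>+x. q x \<partial>L) = 1"
  proof -
    have "(\<integral>\<^sup>+x. q x \<partial>L) = (\<integral>\<^sup>+x. ennreal (1/c) * (\<Sum>s\<in>S. ennreal (p s x)) \<partial>L)"
      unfolding q_def using c pnn
      by (intro nn_integral_cong) (simp add: sum_ennreal sum_nonneg ennreal_mult'[symmetric] divide_inverse mult.commute)
    also have "\<dots> = ennreal (1/c) * (\<Sum>s\<in>S. (\<integral>\<^sup>+x. ennreal (p s x) \<partial>L))"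
      using S by (simp add: nn_integral_cmult nn_integral_sum)
    also have "\<dots> = ennreal (1/c) * ennreal c" using ints by (simp add: c_def ennreal_of_nat_eq_real_of_nat)
    also have "\<dots> = 1" using c by (simp add: ennreal_mult'[symmetric])
    finally show ?thesis .
  qed
  define r where "r x = (q x - p0 x)^2 / p0 x" for x
  have rnn: "r x \<ge> 0" for x unfolding r_def using p0pos[of x] by simp
  have rm[measurable]: "r \<in> borel_measurable L" unfolding r_def by measurable
  have pt1: "ennreal (r x) + 2 * ennreal (q x) = ennreal (q x ^ 2 / p0 x) + ennreal (p0 x)" for x
  proof -
    have "r x + 2 * q x = q x ^ 2 / p0 x + p0 x"
      unfolding r_def using p0pos[of x] by (simp add: field_simps power2_eq_square)
    then show ?thesis using rnn[of x] qnn[of x] p0pos[of x]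
      by (metis ennreal_mult' ennreal_plus ennreal_numeral mult_nonneg_nonneg zero_le_numeral zero_le_divide_iff zero_le_power2 less_imp_le)
  qed
  have "(\<integral>\<^sup>+x. r x \<partial>L) + 2 = (\<integral>\<^sup>+x. r x \<partial>L) + 2 * (\<integral>\<^sup>+x. q x \<partial>L)" using intq by simp
  also have "\<dots> = (\<integral>\<^sup>+x. ennreal (r x) + 2 * ennreal (q x) \<partial>L)"
    by (simp add: nn_integral_add nn_integral_cmult)
  also have "\<dots> = (\<integral>\<^sup>+x. ennreal (q x ^ 2 / p0 x) + ennreal (p0 x) \<partial>L)" using pt1 by simp
  also have "\<dots> = (\<integral>\<^sup>+x. ennreal (q x ^ 2 / p0 x) \<partial>L) + 1"
    using int0 by (simp add: nn_integral_add)
  also have "(\<integral>\<^sup>+x. ennreal (q x ^ 2 / p0 x) \<partial>L) = (\<integral>\<^sup>+x. ennreal ((\<Sum>s\<in>S. p s x)^2 / (real (card S))^2 / p0 x) \<partial>L)"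
    unfolding q_def c_def by (simp add: power_divide)
  also have "\<dots> + 1 \<le> ennreal (1 + e) + 1" using chi by (rule add_right_mono)
  also have "\<dots> = ennreal e + 2"
  proof -
    have "ennreal (1 + e) = 1 + ennreal e" using e by (simp add: ennreal_plus)
    then show ?thesis by (metis add.commute add.left_commute one_add_one)
  qed
  finally have rint: "(\<integral>\<^sup>+x. r x \<partial>L) \<le> ennreal e"
    using ennreal_add_left_cancel_le[of 2 "(\<integral>\<^sup>+x. r x \<partial>L)" "ennreal e"] by (simp add: add.commute)
  have A0: "(\<integral>\<^sup>+x. ennreal (p0 x) * indicator A x \<partial>L) \<le> 1"
  proof -
    have "(\<integral>\<^sup>+x. ennreal (p0 x) * indicator A x \<partial>L) \<le> (\<integral>\<^sup>+x. ennreal (p0 x) \<partial>L)"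
      by (intro nn_integral_mono) (simp add: indicator_def)
    then show ?thesis using int0 by simp
  qed
  have "(\<integral>\<^sup>+x. ennreal (q x) * indicator A x \<partial>L)
      \<le> (\<integral>\<^sup>+x. ennreal (1 + t) * (ennreal (p0 x) * indicator A x) + ennreal (1 / (4 * t)) * ennreal (r x) \<partial>L)"
  proof (intro nn_integral_mono)
    fix x
    have h: "q x \<le> (1 + t) * p0 x + r x / (4 * t)"
      using am_gm_pt[OF p0pos[of x] t, of "q x"] unfolding r_def by (simp add: field_simps)
    show "ennreal (q x) * indicator A x \<le> ennreal (1 + t) * (ennreal (p0 x) * indicator A x) + ennreal (1 / (4 * t)) * ennreal (r x)"
    proof (cases "x \<in> A")
      case True
      have "ennreal (q x) \<le> ennreal ((1 + t) * p0 x + r x / (4 * t))" using h by (rule ennreal_leI)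
      also have "\<dots> = ennreal (1 + t) * ennreal (p0 x) + ennreal (1 / (4 * t)) * ennreal (r x)"
        using t p0pos[of x] rnn[of x]
        by (simp add: ennreal_plus[symmetric] ennreal_mult'[symmetric] del: ennreal_plus)
      finally show ?thesis using True by simp
    next
      case False
      then show ?thesis by simp
    qed
  qed
  also have "\<dots> = ennreal (1 + t) * (\<integral>\<^sup>+x. ennreal (p0 x) * indicator A x \<partial>L) + ennreal (1 / (4 * t)) * (\<integral>\<^sup>+x. r x \<partial>L)"
    using A by (simp add: nn_integral_add nn_integral_cmult)
  also have "\<dots> \<le> (\<integral>\<^sup>+x. ennreal (p0 x) * indicator A x \<partial>L) + ennreal t + ennreal (1 / (4 * t)) * ennreal e"
  proof (intro add_mono mult_left_mono rint)
    show "ennreal (1 + t) * (\<integral>\<^sup>+x. ennreal (p0 x) * indicator A x \<partial>L) \<le> (\<integral>\<^sup>+x. ennreal (p0 x) * indicator A x \<partial>L) + ennreal t"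
    proof -
      have "ennreal (1 + t) * (\<integral>\<^sup>+x. ennreal (p0 x) * indicator A x \<partial>L) = (\<integral>\<^sup>+x. ennreal (p0 x) * indicator A x \<partial>L) + ennreal t * (\<integral>\<^sup>+x. ennreal (p0 x) * indicator A x \<partial>L)"
        using t by (simp add: ennreal_plus distrib_right)
      also have "ennreal t * (\<integral>\<^sup>+x. ennreal (p0 x) * indicator A x \<partial>L) \<le> ennreal t * 1"
        using A0 by (rule mult_left_mono) simp
      finally show ?thesis by (simp add: add_left_mono)
    qed
  qed simp
  also have "\<dots> = (\<integral>\<^sup>+x. ennreal (p0 x) * indicator A x \<partial>L) + ennreal (t + e / (4 * t))"
    using t e by (simp add: ennreal_plus[symmetric] ennreal_mult'[symmetric] add.assoc del: ennreal_plus)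
  finally show ?thesis unfolding q_def c_def .
qed


definition Vs :: "nat \<Rightarrow> real \<Rightarrow> (nat \<Rightarrow> bool) \<Rightarrow> real \<Rightarrow> real" where
  "Vs n \<delta> s x = Fw (vval n \<delta> s) (real n * x)"

abbreviation LL :: "nat \<Rightarrow> (nat \<Rightarrow> real) measure" where
  "LL n \<equiv> PiM {..n} (\<lambda>_. lborel)"

lemma nd_abs: "normal_density m \<sigma> = normal_density m \<bar>\<sigma>\<bar>"
  unfolding normal_density_def by (simp add: fun_eq_iff)

lemma prob_gauss: "prob_space (gauss \<mu> v)"
proof (cases "v = 0")
  case True
  then show ?thesis unfolding gauss_def by (simp add: prob_space_return)
next
  case False
  then have "\<bar>sqrt v\<bar> > 0" by simp
  then have "prob_space (density lborel (normal_density \<mu> \<bar>sqrt v\<bar>))" by (intro prob_space_normal_density)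
  then show ?thesis using False unfolding gauss_def by (simp add: nd_abs[of \<mu> "sqrt v"])
qed

lemma prob_law: "prob_space (law n f V)"
  unfolding law_def by (rule prob_space_PiM) (rule prob_gauss)

lemma sets_gauss: "sets (gauss \<mu> v) = sets borel"
  by (cases "v = 0") (simp_all add: gauss_def)

lemma sets_law: "sets (law n f V) = sets (LL n)"
  unfolding law_def by (rule sets_PiM_cong) (simp_all add: sets_gauss)

lemma space_law: "space (law n f V) = space (LL n)"
  by (rule sets_eq_imp_space_eq[OF sets_law])

lemma sets_sample: "sets (sample_space n) = sets (LL n)"
  unfolding sample_space_def by (rule sets_PiM_cong) simp_all

lemma Vs_design: "n > 0 \<Longrightarrow> Vs n \<delta> s (design n i) = vval n \<delta> s i"
  unfolding Vs_def design_def by (simp add: Fw_nat)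

lemma law_alt:
  assumes n: "n > 0" and d: "0 \<le> \<delta>" "\<delta> \<le> 1/2"
  shows "law n (\<lambda>_. 0) (Vs n \<delta> s) = density (LL n) (Pd n \<delta> s)"
proof -
  have v: "vval n \<delta> s i > 0" for i using vval_bounds[OF d, of n s i] by simp
  have vne: "vval n \<delta> s i \<noteq> 0" for i using v[of i] by simp
  have "law n (\<lambda>_. 0) (Vs n \<delta> s) = PiM {..n} (\<lambda>i. density lborel (normal_density 0 (sqrt (vval n \<delta> s i))))"
    unfolding law_def using vne n by (intro PiM_cong) (auto simp: gauss_def Vs_design)
  also have "\<dots> = density (LL n) (\<lambda>x. \<Prod>i\<le>n. normal_density 0 (sqrt (vval n \<delta> s i)) (x i))"
    using v by (intro PiM_density_lborel) (auto simp: normal_density_nonneg intro!: prob_space_normal_density)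
  finally show ?thesis unfolding Pd_def .
qed

lemma law_null: "law n (\<lambda>_. 0) (\<lambda>_. 1) = density (LL n) (P0d n)"
proof -
  have "law n (\<lambda>_. 0) (\<lambda>_. 1) = PiM {..n} (\<lambda>i. density lborel (normal_density 0 1))"
    unfolding law_def by (intro PiM_cong) (auto simp: gauss_def)
  also have "\<dots> = density (LL n) (\<lambda>x. \<Prod>i\<le>n. normal_density 0 1 (x i))"
    by (intro PiM_density_lborel) (auto simp: normal_density_nonneg intro!: prob_space_normal_density)
  finally show ?thesis unfolding P0d_def .
qed

lemma density_int1:
  assumes "prob_space (density (LL n) p)" and [measurable]: "p \<in> borel_measurable (LL n)"
  shows "(\<integral>\<^sup>+x. ennreal (p x) \<partial>LL n) = 1"
proof -
  have "emeasure (density (LL n) p) (space (LL n)) = 1"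
    using prob_space.emeasure_space_1[OF assms(1)] by simp
  then show ?thesis by (simp add: emeasure_density)
qed


lemma holder_zero: "M \<ge> 0 \<Longrightarrow> holder_class \<alpha> M (\<lambda>_. 0)"
  unfolding holder_class_def Let_def
  by (intro exI[of _ "\<lambda>_ _. 0"]) auto

lemma Vs_in_D1:
  assumes n: "n > 0" and b: "0 < \<beta>" "\<beta> \<le> 1/4" and d: "0 \<le> \<delta>" "\<delta> \<le> 1/2"
    and hM: "2 * \<delta> * real n powr \<beta> \<le> M" and M: "2 \<le> M"
    and eps: "\<epsilon> = \<delta> / 2"
  shows "Vs n \<delta> s \<in> D1 \<beta> M n \<epsilon>"
proof -
  define w where "w = vval n \<delta> s"
  have w: "\<bar>w i - 1\<bar> \<le> \<delta>" for i
  proof -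
    have "\<bar>w i - 1\<bar> = \<delta> * \<bar>esign n s i\<bar>" unfolding w_def vval_def using d by (simp add: abs_mult)
    also have "\<dots> \<le> \<delta> * 1" using esign_abs[of n s i] d by (intro mult_left_mono) auto
    finally show ?thesis by simp
  qed
  have V: "Vs n \<delta> s x = Fw w (real n * x)" for x unfolding Vs_def w_def ..
  have fl: "nat \<lfloor>\<beta>\<rfloor> = 0" using b by simp
  have hol: "holder_class \<beta> M (Vs n \<delta> s)"
    unfolding holder_class_def Let_def fl
  proof (intro exI[of _ "\<lambda>_. Vs n \<delta> s"] conjI ballI allI impI)
    fix k x assume "k \<le> (0::nat)" "x \<in> {0..1::real}"
    then have "\<bar>Fw w (real n * x) - 1\<bar> \<le> \<delta>" by (intro Fw_range w) auto
    then show "\<bar>Vs n \<delta> s x\<bar> \<le> M" unfolding V using d M by linarith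
  next
    fix x y :: real assume x: "x \<in> {0..1}" and y: "y \<in> {0..1}"
    have "\<bar>Fw w (real n * x) - Fw w (real n * y)\<bar> \<le> 2 * \<delta> * real n powr \<beta> * \<bar>x - y\<bar> powr \<beta>"
      using b by (intro Fw_holder w n x y) auto
    also have "\<dots> \<le> M * \<bar>x - y\<bar> powr \<beta>" using hM by (intro mult_right_mono) auto
    finally show "\<bar>Vs n \<delta> s x - Vs n \<delta> s y\<bar> \<le> M * \<bar>x - y\<bar> powr (\<beta> - real 0)" unfolding V by simp
  qed auto
  have nn: "\<forall>x\<in>{0..1}. Vs n \<delta> s x \<ge> 0"
  proof
    fix x :: real assume "x \<in> {0..1}"
    then have "\<bar>Fw w (real n * x) - 1\<bar> \<le> \<delta>" by (intro Fw_range w) auto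
    then show "Vs n \<delta> s x \<ge> 0" unfolding V using d by linarith
  qed
  have des: "Vs n \<delta> s (design n i) = 1 + \<delta> * esign n s i" for i
    using Vs_design[OF n] unfolding vval_def by simp
  have mean: "mean_V n (Vs n \<delta> s) = 1"
  proof -
    have "(\<Sum>i\<le>n. Vs n \<delta> s (design n i)) = (\<Sum>i\<le>n. 1 + \<delta> * esign n s i)" using des by simp
    also have "\<dots> = real (n + 1) + \<delta> * (\<Sum>i\<le>n. esign n s i)" by (simp add: sum.distrib sum_distrib_left)
    also have "\<dots> = real (n + 1)" by (simp add: sum_esign)
    finally show ?thesis unfolding mean_V_def by simp
  qed
  have ss: "(\<Sum>i\<le>n. (Vs n \<delta> s (design n i) - mean_V n (Vs n \<delta> s))\<^sup>2) = \<delta>^2 * (2 * kk n)"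
  proof -
    have "(\<Sum>i\<le>n. (Vs n \<delta> s (design n i) - mean_V n (Vs n \<delta> s))\<^sup>2) = (\<Sum>i\<le>n. \<delta>^2 * (esign n s i)^2)"
      unfolding mean des by (simp add: power_mult_distrib)
    also have "\<dots> = \<delta>^2 * (2 * kk n)" by (simp add: sum_distrib_left[symmetric] sum_esign_sq)
    finally show ?thesis .
  qed
  have "\<epsilon>^2 \<le> \<delta>^2 * (2 * kk n) / real (n + 1)"
  proof -
    have k: "real n \<le> 2 * real (kk n)" using kk_le(2)[of n] by linarith
    have "real (n + 1) \<le> 2 * real n" using n by simp
    also have "\<dots> \<le> 4 * real (kk n)" using k by simp
    finally have "real (n + 1) \<le> 8 * real (kk n)" by simp
    then have "\<delta>^2 * real (n + 1) \<le> \<delta>^2 * (8 * real (kk n))" by (intro mult_left_mono) auto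
    then show ?thesis unfolding eps by (simp add: field_simps power_divide)
  qed
  then have "\<epsilon> \<le> sqrt ((\<Sum>i\<le>n. (Vs n \<delta> s (design n i) - mean_V n (Vs n \<delta> s))\<^sup>2) / real (n + 1))"
    unfolding ss using eps d by (intro real_le_rsqrt) auto
  then show ?thesis unfolding D1_def using hol nn by auto
qed

lemma const_in_D0: "M \<ge> 1 \<Longrightarrow> (\<lambda>_. 1) \<in> D0 M n"
  unfolding D0_def by (auto intro!: exI[of _ 1])


lemma chi_bound:
  fixes c \<eta> :: real
  assumes n: "n \<ge> 1" and c: "0 < c" "c \<le> \<eta> / 3" and \<eta>: "0 < \<eta>" "\<eta> < 1"
    and \<delta>: "\<delta> = 2 * c * real n powr (-1/4)"
  shows "(1 / (1 - \<delta>^4)) ^ kk n \<le> 1 + \<eta>^2"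
proof -
  have n0: "real n \<noteq> 0" using n by simp
  have d4: "\<delta>^4 = 16 * c^4 / real n"
  proof -
    have "(real n powr (-1/4))^4 = real n powr (-1)" using n0 by (simp add: powr_power)
    also have "\<dots> = 1 / real n" using n by (simp add: powr_minus_divide)
    finally show ?thesis unfolding \<delta> by (simp add: power_mult_distrib)
  qed
  have k: "real (kk n) \<le> real n" using n unfolding kk_def by simp
  have c4: "16 * c^4 \<le> \<eta>^2 / 2"
  proof -
    have "c^4 \<le> (\<eta>/3)^4" using c by (intro power_mono) auto
    then have h1: "c^4 * 81 \<le> \<eta>^4" by (simp add: power_divide)
    have h2: "\<eta>^4 \<le> \<eta>^2" using \<eta> by (intro power_decreasing) auto
    have h3: "c^4 \<ge> 0" by simp
    from h1 h2 h3 show ?thesis by linarith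
  qed
  have kd: "real (kk n) * \<delta>^4 \<le> \<eta>^2 / 2"
  proof -
    have "real (kk n) * \<delta>^4 \<le> real n * \<delta>^4" using k by (intro mult_right_mono) auto
    also have "\<dots> = 16 * c^4" unfolding d4 using n0 by simp
    finally show ?thesis using c4 by simp
  qed
  have d41: "\<delta>^4 \<le> 1"
  proof -
    have "\<delta>^4 \<le> real n * \<delta>^4" using n by (simp add: mult_le_cancel_right1)
    also have "\<dots> = 16 * c^4" unfolding d4 using n0 by simp
    moreover have "\<eta>^2 \<le> 1" using \<eta> by (intro power_le_one) auto
    ultimately show ?thesis using c4 by linarith
  qed
  have bern: "1 + real (kk n) * (-(\<delta>^4)) \<le> (1 - \<delta>^4) ^ kk n"
    using Bernoulli_inequality[of "-(\<delta>^4)" "kk n"] d41 by simp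
  have low: "1 - \<eta>^2 / 2 \<le> (1 - \<delta>^4) ^ kk n" using bern kd by simp
  have "\<eta>^2 \<le> 1" using \<eta> by (intro power_le_one) auto
  then have pos: "0 < 1 - \<eta>^2 / 2" by linarith
  have "(1 / (1 - \<delta>^4)) ^ kk n = 1 / (1 - \<delta>^4) ^ kk n" by (simp add: power_divide)
  also have "\<dots> \<le> 1 / (1 - \<eta>^2 / 2)" using low pos by (intro divide_left_mono) auto
  also have "\<dots> \<le> 1 + \<eta>^2"
  proof -
    have "\<eta>^4 \<le> \<eta>^2" using \<eta> by (intro power_decreasing) auto
    then have "1 \<le> (1 + \<eta>^2) * (1 - \<eta>^2 / 2)" by (simp add: algebra_simps power2_eq_square power4_eq_xxxx)
    then show ?thesis using pos by (simp add: divide_le_eq)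
  qed
  finally show ?thesis .
qed


theorem proposition5p2:
  fixes \<alpha> \<beta> :: real
  assumes "\<alpha> > 0" and "0 < \<beta>" and "\<beta> \<le> 1/4"
  shows "\<exists>M0. \<forall>M\<ge>M0. \<forall>\<eta>. 0 < \<eta> \<and> \<eta> < 1 \<longrightarrow>
    (\<exists>c\<eta>>0. \<exists>N::nat. \<forall>c n. 0 < c \<and> c < c\<eta> \<and> n \<ge> N \<longrightarrow>
      (INF \<phi>\<in>tests n.
          (SUP fV\<in>{f. holder_class \<alpha> M f} \<times> D0 M n.
              measure (law n (fst fV) (snd fV)) {y \<in> space (law n (fst fV) (snd fV)). \<phi> y = 1})
        + (SUP fV\<in>{f. holder_class \<alpha> M f} \<times> D1 \<beta> M n (c * real n powr (-1/4)).
              measure (law n (fst fV) (snd fV)) {y \<in> space (law n (fst fV) (snd fV)). \<phi> y = 0}))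
      \<ge> 1 - \<eta>)"
proof (rule exI[of _ "2::real"], intro allI impI)
  fix M \<eta> :: real
  assume M: "M \<ge> 2" and eta: "0 < \<eta> \<and> \<eta> < 1"
  define c\<eta> where "c\<eta> = min (1/4) (min (M/4) (\<eta>/3))"
  have c\<eta>: "c\<eta> > 0" using M eta unfolding c\<eta>_def by simp
  show "\<exists>c\<eta>>0. \<exists>N::nat. \<forall>c n. 0 < c \<and> c < c\<eta> \<and> n \<ge> N \<longrightarrow>
      (INF \<phi>\<in>tests n.
          (SUP fV\<in>{f. holder_class \<alpha> M f} \<times> D0 M n.
              measure (law n (fst fV) (snd fV)) {y \<in> space (law n (fst fV) (snd fV)). \<phi> y = 1})
        + (SUP fV\<in>{f. holder_class \<alpha> M f} \<times> D1 \<beta> M n (c * real n powr (-1/4)).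
              measure (law n (fst fV) (snd fV)) {y \<in> space (law n (fst fV) (snd fV)). \<phi> y = 0}))
      \<ge> 1 - \<eta>"
  proof (intro exI[of _ c\<eta>] conjI c\<eta> exI[of _ "1::nat"] allI impI)
    fix c :: real and n :: nat
    assume cn: "0 < c \<and> c < c\<eta> \<and> 1 \<le> n"
    have c: "0 < c" "c \<le> 1/4" "c \<le> M/4" "c \<le> \<eta>/3" using cn unfolding c\<eta>_def by auto
    have n: "n \<ge> 1" "n > 0" using cn by auto
    define r where "r = real n powr (-1/4)"
    have r: "0 < r" "r \<le> 1"
    proof -
      show "0 < r" unfolding r_def using n by simp
      have "1 \<le> real n powr (1/4)" using n by (intro ge_one_powr_ge_zero) auto
      then show "r \<le> 1" unfolding r_def by (auto simp: powr_minus_divide divide_le_eq)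
    qed
    define \<delta> where "\<delta> = 2 * c * r"
    have d: "0 \<le> \<delta>" "\<delta> \<le> 1/2"
    proof -
      show "0 \<le> \<delta>" unfolding \<delta>_def using c r by simp
      have "2 * c * r \<le> 2 * (1/4) * 1" using c r by (intro mult_mono) auto
      then show "\<delta> \<le> 1/2" unfolding \<delta>_def by simp
    qed
    have hM: "2 * \<delta> * real n powr \<beta> \<le> M"
    proof -
      have pa: "real n powr (-1/4) * real n powr \<beta> = real n powr (\<beta> + (-1/4))"
        using powr_add[of "real n" \<beta> "-1/4"] by (simp only: mult.commute)
      have "2 * \<delta> * real n powr \<beta> = 4 * c * (real n powr (-1/4) * real n powr \<beta>)"
        unfolding \<delta>_def r_def by (simp add: mult.assoc)
      also have "\<dots> = 4 * c * real n powr (\<beta> + (-1/4))" by (simp only: pa)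
      also have "real n powr (\<beta> + (-1/4)) \<le> real n powr 0"
        using n assms(3) by (intro powr_mono) auto
      then have "4 * c * real n powr (\<beta> + (-1/4)) \<le> 4 * c * 1" using c n by (intro mult_left_mono) auto
      finally show ?thesis using c by simp
    qed
    have chi: "(1 / (1 - \<delta>^4)) ^ kk n \<le> 1 + \<eta>^2"
      using chi_bound[of n c \<eta> \<delta>] n c eta unfolding \<delta>_def r_def by simp
    have eps: "c * real n powr (-1/4) = \<delta> / 2" unfolding \<delta>_def r_def by simp
    let ?H = "{f. holder_class \<alpha> M f}"
    let ?D1 = "D1 \<beta> M n (c * real n powr (-1/4))"
    have H0: "(\<lambda>_. 0) \<in> ?H" using M by (simp add: holder_zero)
    have inD1: "Vs n \<delta> s \<in> ?D1" for s
      unfolding eps using Vs_in_D1[OF n(2) assms(2,3) d hM _ refl] M by simp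
    have inD0: "(\<lambda>_. 1) \<in> D0 M n" using M by (intro const_in_D0) simp
    have bdd: "bdd_above ((\<lambda>fV. measure (law n (fst fV) (snd fV)) (X fV)) ` B)" for X B
      by (intro bdd_aboveI2[of _ _ 1] prob_space.prob_le_1 prob_law)
    define S where "S = SS n"
    define cS where "cS = real (card S)"
    have S: "finite S" "S \<noteq> {}" "cS > 0"
    proof -
      show "finite S" unfolding S_def by (rule finite_SS)
      have "card S > 0" unfolding S_def card_SS by simp
      then show "S \<noteq> {}" "cS > 0" unfolding cS_def by auto
    qed
    have P0m[measurable]: "P0d n \<in> borel_measurable (LL n)" unfolding P0d_def by measurable
    have Pm[measurable]: "Pd n \<delta> s \<in> borel_measurable (LL n)" for s unfolding Pd_def by measurable
    have P0pos: "P0d n x > 0" for x unfolding P0d_def by (intro prod_pos) (simp add: normal_density_pos)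
    have Pnn: "Pd n \<delta> s x \<ge> 0" for s x unfolding Pd_def by (intro prod_nonneg) (simp add: normal_density_nonneg)
    have int0: "(\<integral>\<^sup>+x. P0d n x \<partial>LL n) = 1"
      using prob_law[of n "\<lambda>_. 0" "\<lambda>_. 1"] unfolding law_null by (intro density_int1) auto
    have ints: "(\<integral>\<^sup>+x. Pd n \<delta> s x \<partial>LL n) = 1" for s
      using prob_law[of n "\<lambda>_. 0" "Vs n \<delta> s"] unfolding law_alt[OF n(2) d] by (intro density_int1) auto
    have chiE: "(\<integral>\<^sup>+x. ennreal ((\<Sum>s\<in>S. Pd n \<delta> s x)^2 / (real (card S))^2 / P0d n x) \<partial>LL n) \<le> ennreal (1 + \<eta>^2)"
      unfolding S_def chi_value[OF d] using chi by (rule ennreal_leI)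
    show "1 - \<eta> \<le> (INF \<phi>\<in>tests n.
          (SUP fV\<in>?H \<times> D0 M n.
              measure (law n (fst fV) (snd fV)) {y \<in> space (law n (fst fV) (snd fV)). \<phi> y = 1})
        + (SUP fV\<in>?H \<times> ?D1.
              measure (law n (fst fV) (snd fV)) {y \<in> space (law n (fst fV) (snd fV)). \<phi> y = 0}))"
    proof (rule cINF_greatest)
      show "tests n \<noteq> {}"
      proof -
        have "(\<lambda>_. 0) \<in> tests n" unfolding tests_def by simp
        then show ?thesis by blast
      qed
    next
      fix \<phi> assume \<phi>: "\<phi> \<in> tests n"
      define A where "A = {y \<in> space (LL n). \<phi> y = 1}"
      have \<phi>m: "\<phi> \<in> LL n \<rightarrow>\<^sub>M count_space UNIV"
        using \<phi> unfolding tests_def using measurable_cong_sets[OF sets_sample refl] by auto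
      have \<phi>01: "\<phi> y = 0 \<or> \<phi> y = 1" for y using \<phi> unfolding tests_def by auto
      have A: "A \<in> sets (LL n)"
      proof -
        have "\<phi> -` {1} \<inter> space (LL n) \<in> sets (LL n)" using \<phi>m by (rule measurable_sets) simp
        moreover have "\<phi> -` {1} \<inter> space (LL n) = A" unfolding A_def by auto
        ultimately show ?thesis by simp
      qed
      have A1: "{y \<in> space (law n f V). \<phi> y = 1} = A" for f V unfolding A_def space_law ..
      have A0: "{y \<in> space (law n f V). \<phi> y = 0} = space (law n f V) - A" for f V
        unfolding A_def space_law using \<phi>01 by auto
      define a0 where "a0 = measure (law n (\<lambda>_. 0) (\<lambda>_. 1)) A"
      define a where "a s = measure (law n (\<lambda>_. 0) (Vs n \<delta> s)) A" for s
      have kb: "(\<integral>\<^sup>+x. ennreal ((\<Sum>s\<in>S. Pd n \<delta> s x) / card S) * indicator A x \<partial>LL n)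
          \<le> (\<integral>\<^sup>+x. ennreal (P0d n x) * indicator A x \<partial>LL n) + ennreal (\<eta>/2 + \<eta>^2 / (4 * (\<eta>/2)))"
        using eta by (intro key_bound[OF S(1,2) P0m Pm P0pos Pnn int0 ints chiE] A) auto
      have e0: "(\<integral>\<^sup>+x. ennreal (P0d n x) * indicator A x \<partial>LL n) = ennreal a0"
      proof -
        have "(\<integral>\<^sup>+x. ennreal (P0d n x) * indicator A x \<partial>LL n) = emeasure (law n (\<lambda>_. 0) (\<lambda>_. 1)) A"
          unfolding law_null using A by (simp add: emeasure_density)
        also have "\<dots> = ennreal a0" unfolding a0_def using prob_law by (rule finite_measure.emeasure_eq_measure[OF prob_space.axioms(1)])
        finally show ?thesis .
      qed
      have es: "(\<integral>\<^sup>+x. ennreal (Pd n \<delta> s x) * indicator A x \<partial>LL n) = ennreal (a s)" for s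
      proof -
        have "(\<integral>\<^sup>+x. ennreal (Pd n \<delta> s x) * indicator A x \<partial>LL n) = emeasure (law n (\<lambda>_. 0) (Vs n \<delta> s)) A"
          unfolding law_alt[OF n(2) d] using A by (simp add: emeasure_density)
        also have "\<dots> = ennreal (a s)" unfolding a_def using prob_law by (rule finite_measure.emeasure_eq_measure[OF prob_space.axioms(1)])
        finally show ?thesis .
      qed
      have anr: "a s \<ge> 0" for s unfolding a_def by simp
      have lhs: "(\<integral>\<^sup>+x. ennreal ((\<Sum>s\<in>S. Pd n \<delta> s x) / card S) * indicator A x \<partial>LL n)
          = ennreal ((\<Sum>s\<in>S. a s) / cS)"
      proof -
        have "(\<integral>\<^sup>+x. ennreal ((\<Sum>s\<in>S. Pd n \<delta> s x) / card S) * indicator A x \<partial>LL n)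
            = (\<integral>\<^sup>+x. ennreal (1 / cS) * (\<Sum>s\<in>S. ennreal (Pd n \<delta> s x) * indicator A x) \<partial>LL n)"
        proof (intro nn_integral_cong)
          fix x
          have "(\<Sum>s\<in>S. ennreal (Pd n \<delta> s x) * indicator A x) = ennreal (\<Sum>s\<in>S. Pd n \<delta> s x) * indicator A x"
            using Pnn by (simp add: sum_distrib_right[symmetric] sum_nonneg)
          moreover have "ennreal ((\<Sum>s\<in>S. Pd n \<delta> s x) / card S) = ennreal (1 / cS) * ennreal (\<Sum>s\<in>S. Pd n \<delta> s x)"
            using S by (subst ennreal_mult'[symmetric]) (auto simp: cS_def)
          ultimately show "ennreal ((\<Sum>s\<in>S. Pd n \<delta> s x) / card S) * indicator A x
              = ennreal (1 / cS) * (\<Sum>s\<in>S. ennreal (Pd n \<delta> s x) * indicator A x)"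
            by (simp add: mult.assoc)
        qed
        also have "\<dots> = ennreal (1 / cS) * (\<Sum>s\<in>S. ennreal (a s))"
          using A by (simp add: nn_integral_cmult nn_integral_sum es)
        also have "\<dots> = ennreal ((\<Sum>s\<in>S. a s) / cS)"
          using anr S by (simp add: sum_nonneg ennreal_mult'[symmetric])
        finally show ?thesis .
      qed
      have "ennreal ((\<Sum>s\<in>S. a s) / cS) \<le> ennreal (a0 + \<eta>)"
      proof -
        have "\<eta>/2 + \<eta>^2 / (4 * (\<eta>/2)) = \<eta>" using eta by (simp add: power2_eq_square field_simps)
        moreover have "a0 \<ge> 0" unfolding a0_def by simp
        ultimately show ?thesis using kb unfolding lhs e0 using eta by (simp add: ennreal_plus[symmetric] del: ennreal_plus)
      qed
      then have avg: "(\<Sum>s\<in>S. a s) / cS \<le> a0 + \<eta>"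
        using eta unfolding a0_def by (subst (asm) ennreal_le_iff) auto
      have sup0: "a0 \<le> (SUP fV\<in>?H \<times> D0 M n.
              measure (law n (fst fV) (snd fV)) {y \<in> space (law n (fst fV) (snd fV)). \<phi> y = 1})"
      proof -
        have "a0 = (\<lambda>fV. measure (law n (fst fV) (snd fV)) {y \<in> space (law n (fst fV) (snd fV)). \<phi> y = 1}) ((\<lambda>_. 0), (\<lambda>_. 1))"
          unfolding a0_def A1 by simp
        also have "\<dots> \<le> (SUP fV\<in>?H \<times> D0 M n.
              measure (law n (fst fV) (snd fV)) {y \<in> space (law n (fst fV) (snd fV)). \<phi> y = 1})"
          using H0 inD0 by (intro cSUP_upper bdd) auto
        finally show ?thesis .
      qed
      define sup1 where "sup1 = (SUP fV\<in>?H \<times> ?D1.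
              measure (law n (fst fV) (snd fV)) {y \<in> space (law n (fst fV) (snd fV)). \<phi> y = 0})"
      have each: "1 - a s \<le> sup1" for s
      proof -
        have "1 - a s = measure (law n (\<lambda>_. 0) (Vs n \<delta> s)) (space (law n (\<lambda>_. 0) (Vs n \<delta> s)) - A)"
          unfolding a_def using A sets_law by (intro prob_space.prob_compl[symmetric] prob_law) auto
        also have "\<dots> = (\<lambda>fV. measure (law n (fst fV) (snd fV)) {y \<in> space (law n (fst fV) (snd fV)). \<phi> y = 0}) ((\<lambda>_. 0), Vs n \<delta> s)"
          unfolding A0 by simp
        also have "\<dots> \<le> sup1" unfolding sup1_def using H0 inD1 by (intro cSUP_upper bdd) auto
        finally show ?thesis .
      qed
      have "(\<Sum>s\<in>S. 1 - a s) \<le> cS * sup1" unfolding cS_def by (rule sum_bounded_above) (rule each)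
      then have "(\<Sum>s\<in>S. 1 - a s) / cS \<le> sup1" using S by (simp add: divide_le_eq mult.commute)
      moreover have "(\<Sum>s\<in>S. 1 - a s) / cS = 1 - (\<Sum>s\<in>S. a s) / cS"
        using S by (simp add: sum_subtractf cS_def field_simps)
      ultimately have "1 - a0 - \<eta> \<le> sup1" using avg by linarith
      then show "1 - \<eta> \<le> (SUP fV\<in>?H \<times> D0 M n.
              measure (law n (fst fV) (snd fV)) {y \<in> space (law n (fst fV) (snd fV)). \<phi> y = 1})
        + (SUP fV\<in>?H \<times> ?D1.
              measure (law n (fst fV) (snd fV)) {y \<in> space (law n (fst fV) (snd fV)). \<phi> y = 0})"
        using sup0 unfolding sup1_def by linarith
    qed
  qed
qed

end
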